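(* For $r\ge0$ and integers $M\ge1$, $N\ge1$ let $$\eta(r,M,N):=\int_0^\infty\frac{1}{(1+e^{8r}\gamma^2)^M}\Big(\frac{\gamma^2}{1+\gamma^2}\Big)^N\frac{d\gamma}{\gamma^2}.$$ Then: (i) $\frac\pi2e^{-4r}c^{(M)}_1\le\eta(r,M,1)\le\frac\pi2e^{-4r}c^{(M-1)}_1$; (ii) if $M>N$: $\frac{1}{2^M2^N}e^{-8(M+1)r}\frac{1}{2M+1}\le\eta(r,M,N)\le e^{-8r(N-1)-4r}\frac\pi2c^{(M-N)}_N+e^{-8Mr}\frac{1}{2M-1}$; (iii) if $M\le N$: $\frac{1}{2^M2^N}e^{-8(M+1)r}\frac{1}{2M+1}\le\eta(r,M,N)\le e^{-8r(M-1)-4r}\frac\pi2c^{(0)}_M+e^{-8Mr}\frac{1}{2M-1}$.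
   Context: For integers $k\ge1$, $j\ge0$: $c^{(j)}_k:=\frac2\pi\int_0^\infty\Big(\frac{\gamma^2}{1+\gamma^2}\Big)^k\frac{1}{(1+\gamma^2)^j}\frac{d\gamma}{\gamma^2}=\frac1\pi\frac{\Gamma(j+\frac12)\Gamma(k-\frac12)}{\Gamma(j+k)}$, with $\Gamma$ the Gamma function. *)

theory Defs
  imports "HOL-Analysis.Analysis"
begin

definition c_coef :: "nat \<Rightarrow> nat \<Rightarrow> real" where
  "c_coef j k = (2 / pi) *
     (LINT g:{0<..}|lborel. ((g\<^sup>2 / (1 + g\<^sup>2)) ^ k) * (1 / (1 + g\<^sup>2) ^ j) / g\<^sup>2)"

definition eta :: "real \<Rightarrow> nat \<Rightarrow> nat \<Rightarrow> real" where
  "eta r M N = (LINT g:{0<..}|lborel.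
     (1 / (1 + exp (8 * r) * g\<^sup>2) ^ M) * ((g\<^sup>2 / (1 + g\<^sup>2)) ^ N) / g\<^sup>2)"

end

theory Submission
  imports Defs "HOL-Real_Asymp.Real_Asymp"
begin

lemma FTC_bochner:
  fixes f F :: "real \<Rightarrow> real"
  assumes "f \<in> borel_measurable borel"
  assumes "\<And>x. a \<le> x \<Longrightarrow> DERIV F x :> f x"
  assumes "\<And>x. a \<le> x \<Longrightarrow> 0 \<le> f x"
  assumes "(F \<longlongrightarrow> T) at_top"
  shows "has_bochner_integral lborel (\<lambda>x. indicator {a..} x *\<^sub>R f x) (T - F a)"
proof -
  have mono: "F a \<le> T"
  proof (rule tendsto_lowerbound[OF assms(4)])
    show "\<forall>\<^sub>F x in at_top. F a \<le> F x"
    proof (rule eventually_at_top_linorderI[of a])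
      fix x assume "a \<le> x"
      show "F a \<le> F x"
      proof (rule DERIV_nonneg_imp_increasing_open[of a x F])
        show "continuous_on {a..x} F"
          using assms(2) by (intro continuous_at_imp_continuous_on) (meson DERIV_isCont atLeastAtMost_iff)
      next
        fix y assume "a < y" "y < x"
        then show "\<exists>d. (F has_real_derivative d) (at y) \<and> 0 \<le> d"
          using assms(2,3)[of y] by auto
      qed (use \<open>a \<le> x\<close> in auto)
    qed
  qed simp
  have "(\<integral>\<^sup>+x. ennreal (f x) * indicator {a ..} x \<partial>lborel) = T - F a"
    by (rule nn_integral_FTC_atLeast[OF assms])
  moreover have "(\<integral>\<^sup>+x. ennreal (indicator {a..} x *\<^sub>R f x) \<partial>lborel) = (\<integral>\<^sup>+x. ennreal (f x) * indicator {a ..} x \<partial>lborel)"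
    by (intro nn_integral_cong) (auto split: split_indicator)
  ultimately show ?thesis
    using mono assms(3)
    by (intro has_bochner_integral_nn_integral) (auto simp: ennreal_minus split: split_indicator intro!: borel_measurable_times assms(1))
qed

definition Cf :: "nat \<Rightarrow> nat \<Rightarrow> real \<Rightarrow> real" where
  "Cf j k g = ((g\<^sup>2 / (1 + g\<^sup>2)) ^ k) * (1 / (1 + g\<^sup>2) ^ j) / g\<^sup>2"

lemma c_coef_Cf: "c_coef j k = 2 / pi * (LINT g:{0<..}|lborel. Cf j k g)"
  by (simp add: c_coef_def Cf_def)

lemma subst_scale:
  fixes f :: "real \<Rightarrow> real" and a :: real
  assumes "a > 0"
  shows "(LINT t:{0<..}|lborel. f t) = a * (LINT g:{0<..}|lborel. f (a * g))"
proof -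
  have "(LINT t:{0<..}|lborel. f t) = integral\<^sup>L lborel (\<lambda>t. indicator {0<..} t *\<^sub>R f t)"
    by (simp add: set_lebesgue_integral_def)
  also have "\<dots> = \<bar>a\<bar> *\<^sub>R integral\<^sup>L lborel (\<lambda>x. indicator {0<..} (0 + a * x) *\<^sub>R f (0 + a * x))"
    by (rule lborel_integral_real_affine) (use assms in auto)
  also have "(\<lambda>x. indicator {0<..} (0 + a * x) *\<^sub>R f (0 + a * x)) = (\<lambda>x. indicator {0<..} x *\<^sub>R f (a * x))"
    using assms by (auto simp: zero_less_mult_iff fun_eq_iff split: split_indicator)
  finally show ?thesis using assms by (simp add: set_lebesgue_integral_def)
qed

lemma Cf_formula:
  assumes "t > 0"
  shows "Cf j (Suc m) t = t ^ (2 * m) / (1 + t\<^sup>2) ^ (Suc m + j)"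
proof -
  have "Cf j (Suc m) t = ((t\<^sup>2) ^ m * t\<^sup>2) / ((1 + t\<^sup>2) ^ Suc m * (1 + t\<^sup>2) ^ j) / t\<^sup>2"
    by (simp add: Cf_def power_divide mult.commute)
  also have "\<dots> = (t\<^sup>2) ^ m / ((1 + t\<^sup>2) ^ Suc m * (1 + t\<^sup>2) ^ j)"
    using assms by simp
  finally show ?thesis by (simp add: power_mult power_add)
qed

lemma Cf_bound:
  fixes t :: real
  assumes "t > 0"
  shows "0 \<le> Cf j (Suc m) t \<and> Cf j (Suc m) t \<le> 1 / (1 + t\<^sup>2)"
proof -
  have p: "0 < 1 + t\<^sup>2" by (simp add: add_pos_nonneg)
  have "t ^ (2 * m) \<le> (1 + t\<^sup>2) ^ m"
    by (simp add: power_mult power_mono)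
  also have "\<dots> \<le> (1 + t\<^sup>2) ^ (m + j)"
    by (rule power_increasing) auto
  finally have le: "t ^ (2 * m) \<le> (1 + t\<^sup>2) ^ (m + j)" .
  have eq: "Cf j (Suc m) t = (t ^ (2 * m) / (1 + t\<^sup>2) ^ (m + j)) / (1 + t\<^sup>2)"
    by (simp add: Cf_formula[OF assms] power_add mult_ac)
  have q: "t ^ (2 * m) / (1 + t\<^sup>2) ^ (m + j) \<le> 1"
    using le p by simp
  have r: "0 \<le> t ^ (2 * m) / (1 + t\<^sup>2) ^ (m + j)" using assms p by simp
  have "0 \<le> Cf j (Suc m) t" unfolding eq using r p by (intro divide_nonneg_pos) auto
  moreover have "Cf j (Suc m) t \<le> 1 / (1 + t\<^sup>2)" unfolding eq
    by (rule divide_right_mono[OF q]) (use p in simp)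
  ultimately show ?thesis by simp
qed

lemma int_inv: "set_integrable lborel {0<..} (\<lambda>t::real. 1 / (1 + t\<^sup>2))"
proof -
  have "has_bochner_integral lborel (\<lambda>x. indicator {0..} x *\<^sub>R (1 / (1 + x\<^sup>2))) (pi / 2 - arctan 0)"
    by (rule FTC_bochner[where F = arctan])
      (auto intro!: derivative_eq_intros tendsto_arctan_at_top simp: add_pos_nonneg power2_eq_square inverse_eq_divide)
  then have "set_integrable lborel {0..} (\<lambda>t::real. 1 / (1 + t\<^sup>2))"
    by (simp add: set_integrable_def has_bochner_integral_iff)
  then show ?thesis
    by (rule set_integrable_subset) auto
qed

lemma Cf_int:
  assumes "a \<ge> 1"
  shows "set_integrable lborel {0<..} (\<lambda>g. Cf j (Suc m) (a * g))"
proof (rule set_integrable_bound[OF int_inv])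
  show "set_borel_measurable lborel {0<..} (\<lambda>g. Cf j (Suc m) (a * g))"
    unfolding set_borel_measurable_def Cf_def by measurable
  show "AE x in lborel. x \<in> {0<..} \<longrightarrow> norm (Cf j (Suc m) (a * x)) \<le> norm (1 / (1 + x\<^sup>2))"
  proof (rule AE_I2, rule impI)
    fix x :: real assume "x \<in> {0<..}"
    then have x: "x > 0" by simp
    then have ax: "a * x > 0" using assms by simp
    have "x\<^sup>2 \<le> (a * x)\<^sup>2" using assms x by (intro power_mono) auto
    then have "1 / (1 + (a * x)\<^sup>2) \<le> 1 / (1 + x\<^sup>2)"
      by (intro divide_left_mono) (auto simp: add_pos_nonneg)
    then show "norm (Cf j (Suc m) (a * x)) \<le> norm (1 / (1 + x\<^sup>2))"
      using Cf_bound[OF ax, of j m] by (simp add: add_pos_nonneg)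
  qed
qed


definition Ef :: "real \<Rightarrow> nat \<Rightarrow> nat \<Rightarrow> real \<Rightarrow> real" where
  "Ef b M N g = (1 / (1 + b * g\<^sup>2) ^ M) * ((g\<^sup>2 / (1 + g\<^sup>2)) ^ N) / g\<^sup>2"

lemma eta_Ef: "eta r M N = (LINT g:{0<..}|lborel. Ef (exp (8 * r)) M N g)"
  by (simp add: eta_def Ef_def)

lemma Ef_Cf: "Ef b M N g = (1 / (1 + b * g\<^sup>2) ^ M) * Cf 0 N g"
  by (simp add: Ef_def Cf_def)

lemma Ef_bound:
  assumes "b \<ge> 0" "g > 0"
  shows "0 \<le> Ef b M (Suc n) g \<and> Ef b M (Suc n) g \<le> 1 / (1 + g\<^sup>2)"
proof -
  have p: "1 \<le> 1 + b * g\<^sup>2" using assms by simp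
  then have q: "0 \<le> 1 / (1 + b * g\<^sup>2) ^ M \<and> 1 / (1 + b * g\<^sup>2) ^ M \<le> 1"
    by (simp add: one_le_power)
  have c: "0 \<le> Cf 0 (Suc n) g" "Cf 0 (Suc n) g \<le> 1 / (1 + g\<^sup>2)"
    using Cf_bound[OF assms(2), of 0 n] by auto
  have "(1 / (1 + b * g\<^sup>2) ^ M) * Cf 0 (Suc n) g \<le> 1 * Cf 0 (Suc n) g"
    using q c by (intro mult_right_mono) auto
  then show ?thesis unfolding Ef_Cf using q c by simp
qed

lemma Ef_int:
  assumes "b \<ge> 0"
  shows "set_integrable lborel {0<..} (Ef b M (Suc n))"
proof (rule set_integrable_bound[OF int_inv])
  show "set_borel_measurable lborel {0<..} (Ef b M (Suc n))"
    unfolding set_borel_measurable_def Ef_def by measurable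
  show "AE x in lborel. x \<in> {0<..} \<longrightarrow> norm (Ef b M (Suc n) x) \<le> norm (1 / (1 + x\<^sup>2))"
    using Ef_bound[OF assms] by (intro AE_I2) (auto simp: add_pos_nonneg)
qed

lemma key_up:
  fixes g :: real
  assumes "g > 0" "k \<le> n"
  shows "Cf 0 (Suc n) g \<le> g ^ (2 * k)"
proof -
  have p: "0 < 1 + g\<^sup>2" by (simp add: add_pos_nonneg)
  have "g ^ (2 * n) = g ^ (2 * k) * (g\<^sup>2) ^ (n - k)"
    using assms by (simp add: power_mult power_add[symmetric])
  also have "\<dots> \<le> g ^ (2 * k) * (1 + g\<^sup>2) ^ (n - k)"
    using assms by (intro mult_left_mono power_mono) auto
  also have "\<dots> \<le> g ^ (2 * k) * (1 + g\<^sup>2) ^ (Suc n)"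
    using assms by (intro mult_left_mono power_increasing) auto
  finally have "g ^ (2 * n) \<le> g ^ (2 * k) * (1 + g\<^sup>2) ^ (Suc n)" .
  then show ?thesis using assms p
    by (simp add: Cf_formula divide_le_eq)
qed

lemma Ef_up:
  fixes g a :: real
  assumes "g > 0" "k \<le> n" "a > 0"
  shows "Ef (a\<^sup>2) M (Suc n) g \<le> g ^ (2 * k) / (1 + (a * g)\<^sup>2) ^ M"
proof -
  have p: "0 < 1 + (a * g)\<^sup>2" by (simp add: add_pos_nonneg)
  have "Ef (a\<^sup>2) M (Suc n) g = (1 / (1 + (a * g)\<^sup>2) ^ M) * Cf 0 (Suc n) g"
    by (simp add: Ef_Cf power_mult_distrib)
  also have "\<dots> \<le> (1 / (1 + (a * g)\<^sup>2) ^ M) * g ^ (2 * k)"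
    using key_up[OF assms(1,2)] p by (intro mult_left_mono) auto
  finally show ?thesis by simp
qed

lemma Cf_scaled:
  fixes g a :: real
  assumes "g > 0" "a > 0"
  shows "Cf j (Suc n) (a * g) / a ^ (2 * n) = g ^ (2 * n) / (1 + (a * g)\<^sup>2) ^ (Suc n + j)"
  using assms by (simp add: Cf_formula power_mult_distrib)


lemma tail_int:
  fixes K :: real and M :: nat
  assumes "K \<ge> 0"
  shows "has_bochner_integral lborel (\<lambda>x. indicator {1..} x *\<^sub>R (K / x ^ (2 * M + 2))) (K / (2 * M + 1))"
proof -
  define F where "F x = - (K / (2 * M + 1)) / x ^ (2 * M + 1)" for x :: real
  have "has_bochner_integral lborel (\<lambda>x. indicator {1..} x *\<^sub>R (K / x ^ (2 * M + 2))) (0 - F 1)"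
  proof (rule FTC_bochner)
    show "(\<lambda>x::real. K / x ^ (2 * M + 2)) \<in> borel_measurable borel" by measurable
    show "(F \<longlongrightarrow> 0) at_top" unfolding F_def by real_asymp
    fix x :: real assume x: "1 \<le> x"
    show "0 \<le> K / x ^ (2 * M + 2)" using assms x by simp
    have x0: "x > 0" using x by simp
    have d1: "DERIV (\<lambda>x. x ^ (2 * M + 1)) x :> real (2 * M + 1) * x ^ (2 * M)"
      using DERIV_pow[of "2 * M + 1" x] by simp
    have d2: "DERIV (\<lambda>x. inverse (x ^ (2 * M + 1))) x :> - (real (2 * M + 1) * x ^ (2 * M) * inverse ((x ^ (2 * M + 1)) ^ Suc (Suc 0)))"
      by (rule DERIV_inverse_fun[OF d1]) (use x0 in simp)
    have d3: "DERIV (\<lambda>x. - (K / (2 * M + 1)) * inverse (x ^ (2 * M + 1))) x :>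
        - (K / (2 * M + 1)) * - (real (2 * M + 1) * x ^ (2 * M) * inverse ((x ^ (2 * M + 1)) ^ Suc (Suc 0)))"
      by (rule DERIV_cmult[OF d2])
    have pw: "(x ^ (2 * M + 1)) ^ Suc (Suc 0) = x ^ (2 * M) * x ^ (2 * M + 2)"
      by (simp add: power2_eq_square power_add[symmetric]) 
    have eq: "- (K / (2 * M + 1)) * - (real (2 * M + 1) * x ^ (2 * M) * inverse ((x ^ (2 * M + 1)) ^ Suc (Suc 0))) = K / x ^ (2 * M + 2)"
    proof -
      have gen: "\<And>P Q c. P > 0 \<Longrightarrow> Q > 0 \<Longrightarrow> c > 0 \<Longrightarrow> - (K / c) * - (c * P * inverse (P * Q)) = K / Q"
        by (simp add: field_simps)
      have "real (2 * M + 1) = 2 * real M + 1" by simp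
      then show ?thesis unfolding pw using gen[of "x ^ (2 * M)" "x ^ (2 * M + 2)" "2 * real M + 1"] x0 by simp
    qed
    show "DERIV F x :> K / x ^ (2 * M + 2)"
      using d3 unfolding eq F_def by (simp add: divide_inverse)
  qed
  then show ?thesis by (simp add: F_def)
qed

lemma Ef_low:
  fixes b x :: real
  assumes "b \<ge> 1" "x \<ge> 1"
  shows "1 / (2 ^ M * 2 ^ N * b ^ M) / x ^ (2 * M + 2) \<le> Ef b M N x"
proof -
  have x2: "1 \<le> x\<^sup>2" using assms by (simp add: one_le_power)
  have bx: "1 \<le> b * x\<^sup>2" using assms x2 by (metis mult_mono' mult_1_left zero_le_one)
  have A: "1 / (2 * b * x\<^sup>2) ^ M \<le> 1 / (1 + b * x\<^sup>2) ^ M"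
    using bx by (intro divide_left_mono power_mono) auto
  have B: "(1 / 2) ^ N \<le> (x\<^sup>2 / (1 + x\<^sup>2)) ^ N"
    using x2 by (intro power_mono) (auto simp: field_simps)
  have "1 / (2 * b * x\<^sup>2) ^ M * (1 / 2) ^ N \<le> 1 / (1 + b * x\<^sup>2) ^ M * (x\<^sup>2 / (1 + x\<^sup>2)) ^ N"
    using A B assms by (intro mult_mono) auto
  then have "1 / (2 * b * x\<^sup>2) ^ M * (1 / 2) ^ N / x\<^sup>2 \<le> Ef b M N x"
    unfolding Ef_def using x2 by (intro divide_right_mono) auto
  moreover have "1 / (2 * b * x\<^sup>2) ^ M * (1 / 2) ^ N / x\<^sup>2 = 1 / (2 ^ M * 2 ^ N * b ^ M) / x ^ (2 * M + 2)"
    by (simp add: power_mult_distrib power_mult power_add field_simps power2_eq_square power_one_over)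
  ultimately show ?thesis by simp
qed


lemma c_coef_J:
  assumes "a > 0"
  shows "pi / 2 * c_coef j k = a * (LINT g:{0<..}|lborel. Cf j k (a * g))"
  unfolding c_coef_Cf subst_scale[OF assms, of "Cf j k"] by simp

lemma eta_low_gen:
  fixes b :: real
  assumes "b \<ge> 1" "M \<ge> 1"
  shows "1 / (2 ^ M * 2 ^ Suc n * b ^ M) / (2 * M + 1) \<le> (LINT g:{0<..}|lborel. Ef b M (Suc n) g)"
proof -
  define K where "K = 1 / (2 ^ M * 2 ^ Suc n * b ^ M)"
  have K0: "K \<ge> 0" unfolding K_def using assms by simp
  define L where "L g = indicator {1..} g * (K / g ^ (2 * M + 2))" for g :: real
  have eqf: "(\<lambda>g. indicator {0<..} g *\<^sub>R L g) = (\<lambda>x. indicator {1..} x *\<^sub>R (K / x ^ (2 * M + 2)))"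
    by (auto simp: L_def fun_eq_iff split: split_indicator)
  have hb: "has_bochner_integral lborel (\<lambda>g. indicator {0<..} g *\<^sub>R L g) (K / (2 * M + 1))"
    unfolding eqf by (rule tail_int[OF K0])
  have si: "set_integrable lborel {0<..} L"
    using hb by (simp add: set_integrable_def has_bochner_integral_iff)
  have sv: "(LINT g:{0<..}|lborel. L g) = K / (2 * M + 1)"
    using hb by (simp add: set_lebesgue_integral_def has_bochner_integral_iff)
  have "(LINT g:{0<..}|lborel. L g) \<le> (LINT g:{0<..}|lborel. Ef b M (Suc n) g)"
  proof (rule set_integral_mono[OF si Ef_int])
    show "0 \<le> b" using assms by simp
    fix g :: real assume "g \<in> {0<..}"
    then have g: "g > 0" by simp
    show "L g \<le> Ef b M (Suc n) g"
    proof (cases "g \<ge> 1")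
      case True
      then show ?thesis using Ef_low[OF assms(1) True, of M "Suc n"] by (simp add: L_def K_def)
    next
      case False
      then show ?thesis using Ef_bound[of b g M n] assms g by (simp add: L_def)
    qed
  qed
  then show ?thesis using sv by (simp add: K_def)
qed

lemma Ef_lo1:
  fixes a g :: real
  assumes "g > 0" "a \<ge> 1"
  shows "Cf M 1 (a * g) \<le> Ef (a\<^sup>2) M 1 g"
proof -
  have ag: "a * g > 0" using assms by simp
  have p: "0 < 1 + (a * g)\<^sup>2" by (simp add: add_pos_nonneg)
  have "Cf M 1 (a * g) = 1 / (1 + (a * g)\<^sup>2) ^ M * (1 / (1 + (a * g)\<^sup>2))"
    using Cf_formula[OF ag, of M 0] by (simp add: field_simps)
  also have "\<dots> \<le> 1 / (1 + (a * g)\<^sup>2) ^ M * (1 / (1 + g\<^sup>2))"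
  proof (rule mult_left_mono)
    have "g\<^sup>2 \<le> (a * g)\<^sup>2" using assms by (intro power_mono) auto
    then show "1 / (1 + (a * g)\<^sup>2) \<le> 1 / (1 + g\<^sup>2)"
      by (intro divide_left_mono) (auto simp: add_pos_nonneg)
  qed (use p in simp)
  also have "\<dots> = Ef (a\<^sup>2) M 1 g"
    using assms by (simp add: Ef_def power_mult_distrib)
  finally show ?thesis .
qed


lemma part_i:
  fixes a :: real
  assumes "a \<ge> 1" "M \<ge> 1"
  shows "1 / a * (pi / 2 * c_coef M 1) \<le> (LINT g:{0<..}|lborel. Ef (a\<^sup>2) M 1 g)
       \<and> (LINT g:{0<..}|lborel. Ef (a\<^sup>2) M 1 g) \<le> 1 / a * (pi / 2 * c_coef (M - 1) 1)"
proof -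
  have a0: "a > 0" using assms by simp
  have e1: "1 / a * (pi / 2 * c_coef j 1) = (LINT g:{0<..}|lborel. Cf j 1 (a * g))" for j
    unfolding c_coef_J[OF a0] using a0 by simp
  have i1: "set_integrable lborel {0<..} (\<lambda>g. Cf j 1 (a * g))" for j
    using Cf_int[OF assms(1), of j 0] by simp
  have i2: "set_integrable lborel {0<..} (Ef (a\<^sup>2) M 1)"
    using Ef_int[of "a\<^sup>2" M 0] by simp
  have "(LINT g:{0<..}|lborel. Cf M 1 (a * g)) \<le> (LINT g:{0<..}|lborel. Ef (a\<^sup>2) M 1 g)"
    by (rule set_integral_mono[OF i1 i2]) (use Ef_lo1 assms in auto)
  moreover have "(LINT g:{0<..}|lborel. Ef (a\<^sup>2) M 1 g) \<le> (LINT g:{0<..}|lborel. Cf (M - 1) 1 (a * g))"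
  proof (rule set_integral_mono[OF i2 i1])
    fix g :: real assume "g \<in> {0<..}"
    then have g: "g > 0" by simp
    have "Ef (a\<^sup>2) M (Suc 0) g \<le> g ^ (2 * 0) / (1 + (a * g)\<^sup>2) ^ M"
      by (rule Ef_up[OF g _ a0]) simp
    moreover have "Cf (M - 1) (Suc 0) (a * g) = 1 / (1 + (a * g)\<^sup>2) ^ M"
      using Cf_formula[of "a * g" "M - 1" 0] g a0 assms(2) by simp
    ultimately show "Ef (a\<^sup>2) M 1 g \<le> Cf (M - 1) 1 (a * g)" by simp
  qed
  ultimately show ?thesis unfolding e1 by simp
qed

lemma part_up:
  fixes a :: real
  assumes "a \<ge> 1" "k \<le> n" "Suc k + j = M"
  shows "(LINT g:{0<..}|lborel. Ef (a\<^sup>2) M (Suc n) g) \<le> 1 / a ^ (2 * k + 1) * (pi / 2 * c_coef j (Suc k))"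
proof -
  have a0: "a > 0" using assms by simp
  have e1: "1 / a ^ (2 * k + 1) * (pi / 2 * c_coef j (Suc k)) = (LINT g:{0<..}|lborel. Cf j (Suc k) (a * g) / a ^ (2 * k))"
    unfolding c_coef_J[OF a0] using a0 by simp
  have i1: "set_integrable lborel {0<..} (\<lambda>g. Cf j (Suc k) (a * g) / a ^ (2 * k))"
    using Cf_int[OF assms(1), of j k] by simp
  have i2: "set_integrable lborel {0<..} (Ef (a\<^sup>2) M (Suc n))"
    using Ef_int[of "a\<^sup>2" M n] by simp
  have "(LINT g:{0<..}|lborel. Ef (a\<^sup>2) M (Suc n) g) \<le> (LINT g:{0<..}|lborel. Cf j (Suc k) (a * g) / a ^ (2 * k))"
  proof (rule set_integral_mono[OF i2 i1])
    fix g :: real assume "g \<in> {0<..}"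
    then have g: "g > 0" by simp
    show "Ef (a\<^sup>2) M (Suc n) g \<le> Cf j (Suc k) (a * g) / a ^ (2 * k)"
      using Ef_up[OF g assms(2) a0, of M] Cf_scaled[OF g a0, of j k] assms(3) by (simp del: power_Suc)
  qed
  then show ?thesis unfolding e1 .
qed


lemma exp_pow: "exp (- (real k * x)) = 1 / exp x ^ k"
  by (simp add: exp_minus exp_of_nat_mult inverse_eq_divide)

theorem lemma5p4:
  fixes r :: real and M N :: nat
  assumes "r \<ge> 0" and "M \<ge> 1" and "N \<ge> 1"
  shows "(pi / 2 * exp (-4 * r) * c_coef M 1 \<le> eta r M 1 \<and>
          eta r M 1 \<le> pi / 2 * exp (-4 * r) * c_coef (M - 1) 1) \<and>
         (M > N \<longrightarrow>
           1 / (2 ^ M * 2 ^ N) * exp (-8 * (real M + 1) * r) * (1 / (2 * real M + 1)) \<le> eta r M N \<and>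
           eta r M N \<le> exp (-8 * r * (real N - 1) - 4 * r) * (pi / 2) * c_coef (M - N) N
                        + exp (-8 * real M * r) * (1 / (2 * real M - 1))) \<and>
         (M \<le> N \<longrightarrow>
           1 / (2 ^ M * 2 ^ N) * exp (-8 * (real M + 1) * r) * (1 / (2 * real M + 1)) \<le> eta r M N \<and>
           eta r M N \<le> exp (-8 * r * (real M - 1) - 4 * r) * (pi / 2) * c_coef 0 M
                        + exp (-8 * real M * r) * (1 / (2 * real M - 1)))"
proof -
  obtain n where n: "N = Suc n" using assms(3) by (cases N) auto
  obtain m where m: "M = Suc m" using assms(2) by (cases M) auto
  define a where "a = exp (4 * r)"
  have a1: "a \<ge> 1" unfolding a_def using assms(1) by simp
  have a0: "a > 0" using a1 by simp
  have b: "exp (8 * r) = a\<^sup>2"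
    unfolding a_def by (simp add: power2_eq_square exp_add[symmetric])
  have eta: "eta r M N' = (LINT g:{0<..}|lborel. Ef (a\<^sup>2) M N' g)" for N'
    unfolding eta_Ef b ..
  have e4: "exp (-4 * r) = 1 / a" unfolding a_def by (simp add: exp_minus inverse_eq_divide)
  have eN: "exp (-8 * r * (real N - 1) - 4 * r) = 1 / a ^ (2 * n + 1)"
  proof -
    have "-8 * r * (real N - 1) - 4 * r = - (real (2 * n + 1) * (4 * r))" using n by (simp add: algebra_simps)
    then show ?thesis unfolding a_def by (simp only: exp_pow)
  qed
  have eM: "exp (-8 * r * (real M - 1) - 4 * r) = 1 / a ^ (2 * m + 1)"
  proof -
    have "-8 * r * (real M - 1) - 4 * r = - (real (2 * m + 1) * (4 * r))" using m by (simp add: algebra_simps)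
    then show ?thesis unfolding a_def by (simp only: exp_pow)
  qed
  have tail_nn: "0 \<le> exp (-8 * real M * r) * (1 / (2 * real M - 1))" using assms(2) by simp
  have low: "1 / (2 ^ M * 2 ^ N) * exp (-8 * (real M + 1) * r) * (1 / (2 * real M + 1)) \<le> eta r M N"
  proof -
    have "exp (-8 * (real M + 1) * r) \<le> exp (-8 * real M * r)"
      using assms(1) by (simp add: algebra_simps)
    also have "exp (-8 * real M * r) = 1 / exp (8 * r) ^ M"
      using exp_pow[of M "8 * r"] by (simp add: algebra_simps)
    finally have "exp (-8 * (real M + 1) * r) \<le> 1 / (a\<^sup>2) ^ M" unfolding b .
    then have "1 / (2 ^ M * 2 ^ N) * exp (-8 * (real M + 1) * r) * (1 / (2 * real M + 1))
        \<le> 1 / (2 ^ M * 2 ^ N) * (1 / (a\<^sup>2) ^ M) * (1 / (2 * real M + 1))"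
      by (intro mult_right_mono mult_left_mono) auto
    also have "\<dots> = 1 / (2 ^ M * 2 ^ Suc n * (a\<^sup>2) ^ M) / (2 * M + 1)"
      using n by simp
    also have "\<dots> \<le> eta r M N"
      unfolding eta n using eta_low_gen[of "a\<^sup>2" M n] a1 assms(2) by (simp add: one_le_power)
    finally show ?thesis .
  qed
  have P1: "pi / 2 * exp (-4 * r) * c_coef M 1 \<le> eta r M 1 \<and>
          eta r M 1 \<le> pi / 2 * exp (-4 * r) * c_coef (M - 1) 1"
    using part_i[OF a1 assms(2)] unfolding eta e4 by (simp add: mult_ac)
  have P2: "M > N \<longrightarrow> eta r M N \<le> exp (-8 * r * (real N - 1) - 4 * r) * (pi / 2) * c_coef (M - N) N
                        + exp (-8 * real M * r) * (1 / (2 * real M - 1))"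
  proof
    assume "M > N"
    then have "Suc n + (M - N) = M" using n by simp
    from part_up[OF a1 order.refl this]
    have "eta r M N \<le> exp (-8 * r * (real N - 1) - 4 * r) * (pi / 2) * c_coef (M - N) N"
      unfolding eN unfolding eta n by (simp add: mult_ac)
    then show "eta r M N \<le> exp (-8 * r * (real N - 1) - 4 * r) * (pi / 2) * c_coef (M - N) N
                        + exp (-8 * real M * r) * (1 / (2 * real M - 1))" using tail_nn by linarith
  qed
  have P3: "M \<le> N \<longrightarrow> eta r M N \<le> exp (-8 * r * (real M - 1) - 4 * r) * (pi / 2) * c_coef 0 M
                        + exp (-8 * real M * r) * (1 / (2 * real M - 1))"
  proof
    assume "M \<le> N"
    then have mn: "m \<le> n" using n m by simp
    have "Suc m + 0 = M" using m by simp
    from part_up[OF a1 mn this]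
    have "eta r M N \<le> exp (-8 * r * (real M - 1) - 4 * r) * (pi / 2) * c_coef 0 M"
      unfolding eM unfolding eta unfolding n m by (simp add: mult_ac)
    then show "eta r M N \<le> exp (-8 * r * (real M - 1) - 4 * r) * (pi / 2) * c_coef 0 M
                        + exp (-8 * real M * r) * (1 / (2 * real M - 1))" using tail_nn by linarith
  qed
  show ?thesis using P1 P2 P3 low by blast
qed

end
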